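(* (i) Let $p_{1}, p_{2}, m, r \in \mathbb N$. Then \begin{align*} T(p_{1},p_{2},m,1,r,0) &=\sum_{i=2}^{m}\frac{(-1)^{m-i}}{r^{m-i+1}}S_{p_{1},p_{2},i}^{+,+,+} +\frac{(-1)^{m-1}}{r^{m}}\left(S_{p_{1},p_{2}+1}^{+,+}+S_{p_{2},p_{1}+1}^{+,+}\right) -\frac{(-1)^{m-1}}{r^{m}}\zeta(p_{1}+p_{2}+1)\\ &\quad +\frac{(-1)^{m-1}}{r^{m}}\sum_{b=1}^{r-1}S(p_{1},p_{2},1,b,0) +\frac{(-1)^{m-1}}{r^{m}}\left(\sum_{b=1}^{r-1}S(p_{2},p_{1},1,b,0) -\sum_{b=1}^{r-1}S(0,p_{1}+p_{2}+1,1,b,0)\right). \end{align*} (ii) Let $p_{1}, m, r \in \mathbb N$, $p_{2} \in \mathbb N_{0}$ with $m \geq p_{2}+2$. Then \begin{align*} T(p_{1},-p_{2},m,1,r,0)=\frac{1}{p_{2}+1}\sum_{\ell=0}^{p_{2}} \binom{p_{2}+1}{\ell}B_{\ell}^{+}S(p_{1},m-p_{2}-1+\ell,1,r,0)\,. \end{align*} (iii) Let $m, r \in \mathbb N$, $p_{1}, p_{2} \in \mathbb N_{0}$ with $m \geq p_{1}+p_{2}+3$. Then \begin{align*} T(-p_{1},-p_{2},m,1,r,0)=\frac{1}{(p_{1}+1)(p_{2}+1)}\sum_{\ell_{1}=0}^{p_{1}} \sum_{\ell_{2}=0}^{p_{2}} \binom{p_{1}+1}{\ell_{1}}\binom{p_{2}+1}{\ell_{2}}B_{\ell_{1}}^{+}B_{\ell_{2}}^{+}\,S(0,m-p_{1}-p_{2}-1+\ell_{1}+\ell_{2},1,r,0)\,.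 \end{align*}
   Context: $H_n^{(q)}=\sum_{j=1}^n j^{-q}$ for $q\in\mathbb N$; for an integer $q\ge0$, $H_n^{(-q)}=\sum_{\ell=1}^n\ell^q$ (so $H_n^{(0)}=n$). For $q,q_1,q_2\in\mathbb Z$ and $m,t,r\in\mathbb N$: $S(q,m,t,r,0):=\sum_{n=1}^\infty\frac{H_n^{(q)}}{n^{m}(n+r)^{t}}$ and $T(q_{1},q_{2},m,t,r,0):=\sum_{n=1}^\infty\frac{H_n^{(q_{1})}H_n^{(q_{2})}}{n^{m}(n+r)^{t}}$. $S_{p,q}^{+,+}:=\sum_{n\ge1} H_n^{(p)}/n^q$ and $S_{p_1,p_2,q}^{+,+,+}:=\sum_{n\ge1} H_n^{(p_1)}H_n^{(p_2)}/n^q$. Bernoulli numbers $B_j^{+}$: $\frac{x}{1-e^{-x}}=\sum_{j\ge0}B_j^{+}\frac{x^j}{j!}$. Empty sums are $0$. *)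

theory Defs
  imports "HOL-Analysis.Analysis" "HOL-Computational_Algebra.Formal_Power_Series"
begin

definition harm :: "int \<Rightarrow> nat \<Rightarrow> real" where
  "harm q n = (if q \<ge> 0 then (\<Sum>j=1..n. 1 / real j ^ nat q)
               else (\<Sum>l=1..n. real l ^ nat (-q)))"

definition S :: "int \<Rightarrow> nat \<Rightarrow> nat \<Rightarrow> nat \<Rightarrow> real" where
  "S q m t r = (\<Sum>n. harm q (Suc n) / (real (Suc n) ^ m * real (Suc n + r) ^ t))"

definition T :: "int \<Rightarrow> int \<Rightarrow> nat \<Rightarrow> nat \<Rightarrow> nat \<Rightarrow> real" where
  "T q1 q2 m t r = (\<Sum>n. harm q1 (Suc n) * harm q2 (Suc n) /
                          (real (Suc n) ^ m * real (Suc n + r) ^ t))"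

definition Spp :: "nat \<Rightarrow> nat \<Rightarrow> real" where
  "Spp p q = (\<Sum>n. harm (int p) (Suc n) / real (Suc n) ^ q)"

definition Sppp :: "nat \<Rightarrow> nat \<Rightarrow> nat \<Rightarrow> real" where
  "Sppp p1 p2 q = (\<Sum>n. harm (int p1) (Suc n) * harm (int p2) (Suc n) / real (Suc n) ^ q)"

definition zeta_nat :: "nat \<Rightarrow> real" where
  "zeta_nat s = (\<Sum>n. 1 / real (Suc n) ^ s)"

definition bernoulli_plus :: "nat \<Rightarrow> real" where
  "bernoulli_plus j = fact j * fps_nth (fps_X / (1 - fps_exp (-1 :: real))) j"

end

theory Submission
  imports Defs "HOL-Real_Asymp.Real_Asymp"
begin


lemma G_eq: "fps_X / (1 - fps_exp (-1 :: real)) * (1 - fps_exp (-1)) = fps_X"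
proof (rule fps_times_divide_eq)
  have "fps_nth (1 - fps_exp (-1 :: real)) 1 \<noteq> 0" by simp
  then show "(1 - fps_exp (-1 :: real)) \<noteq> 0" by auto
  show "subdegree (1 - fps_exp (-1 :: real)) \<le> subdegree (fps_X :: real fps)"
    by (rule subdegree_leI) simp
qed

lemma sum_exp_tel: "(\<Sum>k=1..n. fps_exp (real k)) * (1 - fps_exp (-1)) = fps_exp (real n) - 1"
proof (induction n)
  case 0 then show ?case by simp
next
  case (Suc n)
  have e: "fps_exp (real (Suc n)) * fps_exp (-1) = fps_exp (real n)"
    by (simp add: fps_exp_add_mult[symmetric])
  have "(\<Sum>k=1..Suc n. fps_exp (real k)) * (1 - fps_exp (-1)) =
     (\<Sum>k=1..n. fps_exp (real k)) * (1 - fps_exp (-1)) + fps_exp (real (Suc n)) * (1 - fps_exp (-1))"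
    by (simp add: algebra_simps)
  also have "\<dots> = fps_exp (real n) - 1 + (fps_exp (real (Suc n)) - fps_exp (real n))"
    using Suc e by (simp add: algebra_simps)
  finally show ?case by simp
qed

lemma aux: fixes q f a b B x :: real
  shows "q > 0 \<Longrightarrow> 1 / q * ((q * f / (a * b)) * B * x) = B * x * f / (a * b)"
  by simp

lemma faulhaber:
  "(\<Sum>l=1..n. real l ^ p) = 1 / real (p + 1) *
     (\<Sum>j=0..p. real ((p + 1) choose j) * bernoulli_plus j * real n ^ (p + 1 - j))"
proof -
  define G where "G = fps_X / (1 - fps_exp (-1 :: real))"
  have "(fps_exp (real n) - 1) * G =
     ((\<Sum>k=1..n. fps_exp (real k)) * (1 - fps_exp (-1))) * G"
    by (simp only: sum_exp_tel)
  also have "\<dots> = (\<Sum>k=1..n. fps_exp (real k)) * (G * (1 - fps_exp (-1)))"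
    by (simp only: mult.assoc mult.commute[of "1 - fps_exp (-1::real)"])
  also have "\<dots> = (\<Sum>k=1..n. fps_exp (real k)) * fps_X"
    unfolding G_def by (simp only: G_eq)
  finally have "(fps_exp (real n) - 1) * G = (\<Sum>k=1..n. fps_exp (real k)) * fps_X" .
  then have "fps_nth (G * (fps_exp (real n) - 1)) (Suc p) = fps_nth ((\<Sum>k=1..n. fps_exp (real k)) * fps_X) (Suc p)"
    by (simp add: mult.commute)
  also have "\<dots> = (\<Sum>k=1..n. real k ^ p / fact p)"
    by (simp add: fps_sum_nth)
  finally have eq: "(\<Sum>j=0..p. fps_nth G j * (real n ^ (Suc p - j) / fact (Suc p - j))) = (\<Sum>k=1..n. real k ^ p / fact p)"
    by (simp add: fps_mult_nth Suc_diff_le)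
  have Gj: "fps_nth G j = bernoulli_plus j / fact j" for j
    unfolding bernoulli_plus_def G_def by simp
  have "(\<Sum>l=1..n. real l ^ p) = fact p * (\<Sum>k=1..n. real k ^ p / fact p)"
    by (simp add: sum_distrib_left)
  also have "\<dots> = fact p * (\<Sum>j=0..p. fps_nth G j * (real n ^ (Suc p - j) / fact (Suc p - j)))"
    by (simp only: eq)
  also have "\<dots> = (\<Sum>j=0..p. fact p * (fps_nth G j * (real n ^ (Suc p - j) / fact (Suc p - j))))"
    by (rule sum_distrib_left)
  also have "\<dots> = (\<Sum>j=0..p. 1 / real (p + 1) * (real ((p + 1) choose j) * bernoulli_plus j * real n ^ (p + 1 - j)))"
  proof (rule sum.cong[OF refl])
    fix j assume j: "j \<in> {0..p}"
    have q: "real (Suc p) = real p + 1" by simp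
    from j have "real (Suc p choose j) = fact (Suc p) / (fact j * fact (Suc p - j))"
      by (intro binomial_fact) auto
    also have "\<dots> = (real p + 1) * fact p / (fact j * fact (Suc p - j))"
      by (simp add: fact_Suc)
    finally have C: "real (Suc p choose j) = (real p + 1) * fact p / (fact j * fact (Suc p - j))" .
    have "1 / real (p + 1) * (real ((p + 1) choose j) * bernoulli_plus j * real n ^ (p + 1 - j))
        = bernoulli_plus j * real n ^ (Suc p - j) * fact p / (fact j * fact (Suc p - j))"
      unfolding Suc_eq_plus1[symmetric] C q by (rule aux) simp
    then show "fact p * (fps_nth G j * (real n ^ (Suc p - j) / fact (Suc p - j))) =
       1 / real (p + 1) * (real ((p + 1) choose j) * bernoulli_plus j * real n ^ (p + 1 - j))"
      by (simp add: Gj)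
  qed
  finally show ?thesis by (simp add: sum_distrib_left)
qed



lemma summable_L2: "summable (\<lambda>n. (1 + ln (real (Suc n)))^2 / real (Suc n)^2)"
proof (rule summable_comparison_test_bigo)
  show "summable (\<lambda>n. norm (real n powr (-3/2)))"
    using summable_real_powr_iff[of "-3/2"] by simp
  show "(\<lambda>n. (1 + ln (real (Suc n)))^2 / real (Suc n)^2) \<in> O(\<lambda>n. real n powr (-3/2))"
    by real_asymp
qed

lemma L_lim: "(\<lambda>n. (1 + ln (real (Suc n)))^2 / real (Suc n)) \<longlonglongrightarrow> 0"
  by real_asymp

lemma summ_bound:
  assumes "\<And>n. 0 \<le> f n" "\<And>n. f n \<le> C * ((1 + ln (real (Suc n)))^2 / real (Suc n)^2)"
  shows "summable f"
  by (rule summable_comparison_test'[where N=0, OF summable_mult[OF summable_L2, of C]])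
     (use assms in auto)

lemma harm_nonneg: "q \<ge> 0 \<Longrightarrow> 0 \<le> harm q n"
  unfolding harm_def by (auto intro: sum_nonneg)

lemma harm_Suc: "q \<ge> 0 \<Longrightarrow> harm q (Suc n) = harm q n + 1 / real (Suc n) ^ nat q"
  unfolding harm_def by simp

lemma harm_zero: "harm 0 n = real n"
  unfolding harm_def by simp

lemma harm_neg: "harm (- int p) n = (\<Sum>l=1..n. real l ^ p)"
  unfolding harm_def by (cases "p = 0") auto

lemma harm1_le: "harm 1 n \<le> 1 + ln (real n)"
proof (induction n)
  case 0 then show ?case by (simp add: harm_def)
next
  case (Suc n)
  show ?case
  proof (cases "n = 0")
    case True then show ?thesis by (simp add: harm_def)
  next
    case False
    have "ln (real n / real (Suc n)) \<le> real n / real (Suc n) - 1"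
      using False by (intro ln_le_minus_one) auto
    also have "\<dots> = - 1 / real (Suc n)" by (simp add: field_simps)
    finally have "1 / real (Suc n) \<le> ln (real (Suc n)) - ln (real n)"
      using False by (simp add: ln_div)
    then show ?thesis using Suc.IH harm_Suc[of 1 n] by simp
  qed
qed

lemma harm_le: assumes "q \<ge> 1" shows "harm q n \<le> 1 + ln (real n)"
proof -
  have "(\<Sum>j=1..n. 1 / real j ^ nat q) \<le> (\<Sum>j=1..n. 1 / real j)"
  proof (rule sum_mono)
    fix j assume "j \<in> {1..n}"
    then have "(1::real) \<le> real j" by simp
    moreover have "1 \<le> nat q" using assms by simp
    ultimately have "real j ^ 1 \<le> real j ^ nat q"
      by (intro power_increasing) auto
    then have "real j \<le> real j ^ nat q" by simp
    then show "1 / real j ^ nat q \<le> 1 / real j" using \<open>1 \<le> real j\<close>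
      by (intro divide_left_mono) auto
  qed
  moreover have "harm q n = (\<Sum>j=1..n. 1 / real j ^ nat q)" using assms by (simp add: harm_def)
  moreover have "harm 1 n = (\<Sum>j=1..n. 1 / real j)" by (simp add: harm_def)
  ultimately show ?thesis using harm1_le[of n] by simp
qed

lemma L_ge1: "1 \<le> 1 + ln (real (Suc n))" by simp

lemma bnd: fixes x D L N :: real
  assumes "0 \<le> x" "x \<le> L^2" "N^2 \<le> D" "0 < N"
  shows "x / D \<le> 1 * (L^2 / N^2)"
proof -
  have "0 < N^2" using assms by simp
  then have D: "0 < D" using assms(3) by linarith
  have "x / D \<le> L^2 / D" using assms D by (intro divide_right_mono) auto
  also have "\<dots> \<le> L^2 / N^2" using assms D by (intro divide_left_mono) auto
  finally show ?thesis by simp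
qed

lemma Npow_ge: "e \<ge> 1 \<Longrightarrow> real (Suc n) \<le> real (Suc n) ^ e"
  using power_increasing[of 1 e "real (Suc n)"] by simp

lemma Npow_ge2: "e \<ge> 2 \<Longrightarrow> real (Suc n)^2 \<le> real (Suc n) ^ e"
  by (intro power_increasing) auto

lemma L_le_sq: "1 \<le> (L::real) \<Longrightarrow> L \<le> L^2"
proof -
  assume "1 \<le> L"
  then have "L * 1 \<le> L * L" by (intro mult_left_mono) auto
  then show ?thesis by (simp add: power2_eq_square)
qed

lemma harm_le_L2: "q \<ge> 1 \<Longrightarrow> harm q (Suc n) \<le> (1 + ln (real (Suc n)))^2"
proof -
  assume q: "q \<ge> 1"
  have "harm q (Suc n) \<le> 1 + ln (real (Suc n))" using harm_le[OF q] .
  also have "\<dots> \<le> (1 + ln (real (Suc n)))^2"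
    using L_le_sq[OF L_ge1[of n]] .
  finally show ?thesis .
qed

lemma harm2_le_L2: "q1 \<ge> 1 \<Longrightarrow> q2 \<ge> 1 \<Longrightarrow> harm q1 (Suc n) * harm q2 (Suc n) \<le> (1 + ln (real (Suc n)))^2"
  using harm_le[of q1 "Suc n"] harm_le[of q2 "Suc n"] harm_nonneg[of q1 "Suc n"] harm_nonneg[of q2 "Suc n"]
  by (simp add: power2_eq_square mult_mono)

lemma sumS1: assumes "p \<ge> 1" "e \<ge> 1"
  shows "summable (\<lambda>n. harm (int p) (Suc n) / (real (Suc n)^e * real (Suc n + b)^1))"
proof (rule summ_bound)
  fix n
  show "0 \<le> harm (int p) (Suc n) / (real (Suc n)^e * real (Suc n + b)^1)"
    by (simp add: harm_nonneg)
  have "real (Suc n)^2 \<le> real (Suc n)^e * real (Suc n + b)"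
    unfolding power2_eq_square using Npow_ge[OF assms(2), of n] by (intro mult_mono) auto
  then show "harm (int p) (Suc n) / (real (Suc n)^e * real (Suc n + b)^1) \<le> 1 * ((1 + ln (real (Suc n)))^2 / real (Suc n)^2)"
    using assms by (intro bnd harm_nonneg harm_le_L2) auto
qed

lemma sumS0: assumes "e \<ge> 2"
  shows "summable (\<lambda>n. harm 0 (Suc n) / (real (Suc n)^e * real (Suc n + b)^1))"
proof (rule summ_bound)
  fix n
  show "0 \<le> harm 0 (Suc n) / (real (Suc n)^e * real (Suc n + b)^1)"
    by (simp add: harm_nonneg)
  have eq: "harm 0 (Suc n) / (real (Suc n)^e * real (Suc n + b)^1) = (real (Suc n) / real (Suc n + b)) / real (Suc n)^e"
    by (simp add: harm_zero)
  have "real (Suc n) / real (Suc n + b) \<le> 1" by simp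
  also have "(1::real) \<le> (1 + ln (real (Suc n)))^2" using L_ge1[of n] by (intro one_le_power) 
  finally have "real (Suc n) / real (Suc n + b) \<le> (1 + ln (real (Suc n)))^2" .
  then show "harm 0 (Suc n) / (real (Suc n)^e * real (Suc n + b)^1) \<le> 1 * ((1 + ln (real (Suc n)))^2 / real (Suc n)^2)"
    unfolding eq using assms by (intro bnd Npow_ge2) auto
qed

lemma sumSppp: assumes "p1 \<ge> 1" "p2 \<ge> 1" "i \<ge> 2"
  shows "summable (\<lambda>n. harm (int p1) (Suc n) * harm (int p2) (Suc n) / real (Suc n) ^ i)"
proof (rule summ_bound)
  fix n
  show "0 \<le> harm (int p1) (Suc n) * harm (int p2) (Suc n) / real (Suc n) ^ i"
    by (simp add: harm_nonneg)
  show "harm (int p1) (Suc n) * harm (int p2) (Suc n) / real (Suc n) ^ i \<le> 1 * ((1 + ln (real (Suc n)))^2 / real (Suc n)^2)"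
    using assms by (intro bnd harm2_le_L2 Npow_ge2 mult_nonneg_nonneg harm_nonneg) auto
qed

lemma sumTk: assumes "p1 \<ge> 1" "p2 \<ge> 1"
  shows "summable (\<lambda>n. harm (int p1) (Suc n) * harm (int p2) (Suc n) / (real (Suc n + k) * real (Suc n + k + 1)))"
proof (rule summ_bound)
  fix n
  show "0 \<le> harm (int p1) (Suc n) * harm (int p2) (Suc n) / (real (Suc n + k) * real (Suc n + k + 1))"
    by (simp add: harm_nonneg)
  have "real (Suc n)^2 \<le> real (Suc n + k) * real (Suc n + k + 1)"
    unfolding power2_eq_square by (intro mult_mono) auto
  then show "harm (int p1) (Suc n) * harm (int p2) (Suc n) / (real (Suc n + k) * real (Suc n + k + 1)) \<le> 1 * ((1 + ln (real (Suc n)))^2 / real (Suc n)^2)"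
    using assms by (intro bnd harm2_le_L2 mult_nonneg_nonneg harm_nonneg) auto
qed



lemma part2:
  fixes p1 p2 m r :: nat
  assumes "p1 \<ge> 1" "m \<ge> p2 + 2"
  shows "T (int p1) (- int p2) m 1 r =
        1 / real (p2 + 1) * (\<Sum>l=0..p2. real ((p2 + 1) choose l) * bernoulli_plus l *
                                          S (int p1) (m - p2 - 1 + l) 1 r)"
proof -
  define c where "c l = 1 / real (p2 + 1) * (real ((p2 + 1) choose l) * bernoulli_plus l)" for l
  define f where "f l n = harm (int p1) (Suc n) / (real (Suc n) ^ (m - p2 - 1 + l) * real (Suc n + r) ^ 1)" for l n
  have pt: "harm (int p1) (Suc n) * harm (- int p2) (Suc n) / (real (Suc n) ^ m * real (Suc n + r) ^ 1)
      = (\<Sum>l=0..p2. c l * f l n)" for n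
  proof -
    have "harm (int p1) (Suc n) * harm (- int p2) (Suc n) / (real (Suc n) ^ m * real (Suc n + r) ^ 1)
      = (\<Sum>l=0..p2. c l * (harm (int p1) (Suc n) * real (Suc n) ^ (p2 + 1 - l) / (real (Suc n) ^ m * real (Suc n + r) ^ 1)))"
      unfolding harm_neg faulhaber c_def by (simp add: sum_distrib_left sum_distrib_right sum_divide_distrib mult_ac)
    also have "\<dots> = (\<Sum>l=0..p2. c l * f l n)"
    proof (rule sum.cong[OF refl])
      fix l assume "l \<in> {0..p2}"
      then have m: "m = (m - p2 - 1 + l) + (p2 + 1 - l)" using assms by auto
      have "real (Suc n) ^ m = real (Suc n) ^ (m - p2 - 1 + l) * real (Suc n) ^ (p2 + 1 - l)"
        by (subst m) (simp add: power_add)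
      then show "c l * (harm (int p1) (Suc n) * real (Suc n) ^ (p2 + 1 - l) / (real (Suc n) ^ m * real (Suc n + r) ^ 1)) = c l * f l n"
        unfolding f_def by simp
    qed
    finally show ?thesis .
  qed
  have sm: "summable (f l)" if "l \<in> {0..p2}" for l
    unfolding f_def using assms that by (intro sumS1) auto
  have "T (int p1) (- int p2) m 1 r = (\<Sum>n. \<Sum>l=0..p2. c l * f l n)"
    unfolding T_def pt ..
  also have "\<dots> = (\<Sum>l=0..p2. \<Sum>n. c l * f l n)"
    by (intro suminf_sum summable_mult sm) auto
  also have "\<dots> = (\<Sum>l=0..p2. c l * suminf (f l))"
    using sm by (auto intro!: sum.cong suminf_mult)
  also have "\<dots> = (\<Sum>l=0..p2. c l * S (int p1) (m - p2 - 1 + l) 1 r)"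
    unfolding f_def S_def ..
  finally show ?thesis unfolding c_def by (simp add: sum_distrib_left mult_ac)
qed

lemma part3:
  fixes p1 p2 m r :: nat
  assumes "m \<ge> p1 + p2 + 3"
  shows "T (- int p1) (- int p2) m 1 r =
        1 / (real (p1 + 1) * real (p2 + 1)) *
          (\<Sum>l1=0..p1. \<Sum>l2=0..p2. real ((p1 + 1) choose l1) * real ((p2 + 1) choose l2) *
               bernoulli_plus l1 * bernoulli_plus l2 *
               S 0 (m - p1 - p2 - 1 + l1 + l2) 1 r)"
proof -
  define c where "c l1 l2 = 1 / (real (p1 + 1) * real (p2 + 1)) * (real ((p1 + 1) choose l1) * real ((p2 + 1) choose l2) *
               bernoulli_plus l1 * bernoulli_plus l2)" for l1 l2
  define f where "f l1 l2 n = harm 0 (Suc n) / (real (Suc n) ^ (m - p1 - p2 - 1 + l1 + l2) * real (Suc n + r) ^ 1)" for l1 l2 n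
  have pt: "harm (- int p1) (Suc n) * harm (- int p2) (Suc n) / (real (Suc n) ^ m * real (Suc n + r) ^ 1)
      = (\<Sum>l1=0..p1. \<Sum>l2=0..p2. c l1 l2 * f l1 l2 n)" for n
  proof -
    have "harm (- int p1) (Suc n) * harm (- int p2) (Suc n) / (real (Suc n) ^ m * real (Suc n + r) ^ 1)
      = (\<Sum>l1=0..p1. \<Sum>l2=0..p2. c l1 l2 * (real (Suc n) ^ (p1 + 1 - l1) * real (Suc n) ^ (p2 + 1 - l2) / (real (Suc n) ^ m * real (Suc n + r) ^ 1)))"
    proof -
      define u where "u l1 = 1 / real (p1 + 1) * (real ((p1 + 1) choose l1) * bernoulli_plus l1 * real (Suc n) ^ (p1 + 1 - l1))" for l1
      define v where "v l2 = 1 / real (p2 + 1) * (real ((p2 + 1) choose l2) * bernoulli_plus l2 * real (Suc n) ^ (p2 + 1 - l2))" for l2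
      have hu: "harm (- int p1) (Suc n) = (\<Sum>l1=0..p1. u l1)"
        unfolding harm_neg faulhaber u_def by (simp add: sum_distrib_left)
      have hv: "harm (- int p2) (Suc n) = (\<Sum>l2=0..p2. v l2)"
        unfolding harm_neg faulhaber v_def by (simp add: sum_distrib_left)
      have "harm (- int p1) (Suc n) * harm (- int p2) (Suc n) / (real (Suc n) ^ m * real (Suc n + r) ^ 1)
         = (\<Sum>l1=0..p1. \<Sum>l2=0..p2. u l1 * v l2 / (real (Suc n) ^ m * real (Suc n + r) ^ 1))"
        unfolding hu hv sum_product sum_divide_distrib ..
      also have "\<dots> = (\<Sum>l1=0..p1. \<Sum>l2=0..p2. c l1 l2 * (real (Suc n) ^ (p1 + 1 - l1) * real (Suc n) ^ (p2 + 1 - l2) / (real (Suc n) ^ m * real (Suc n + r) ^ 1)))"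
        by (intro sum.cong refl) (simp add: u_def v_def c_def)
      finally show ?thesis .
    qed
    also have "\<dots> = (\<Sum>l1=0..p1. \<Sum>l2=0..p2. c l1 l2 * f l1 l2 n)"
    proof (intro sum.cong refl)
      fix l1 l2 assume "l1 \<in> {0..p1}" "l2 \<in> {0..p2}"
      then have m: "m + 1 = (m - p1 - p2 - 1 + l1 + l2) + (p1 + 1 - l1) + (p2 + 1 - l2)" using assms by auto
      have "real (Suc n) ^ m * real (Suc n) = real (Suc n) ^ (m - p1 - p2 - 1 + l1 + l2) * real (Suc n) ^ (p1 + 1 - l1) * real (Suc n) ^ (p2 + 1 - l2)"
        by (subst power_Suc2[symmetric], subst Suc_eq_plus1, subst m) (simp add: power_add)
      then show "c l1 l2 * (real (Suc n) ^ (p1 + 1 - l1) * real (Suc n) ^ (p2 + 1 - l2) / (real (Suc n) ^ m * real (Suc n + r) ^ 1)) = c l1 l2 * f l1 l2 n"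
        unfolding f_def harm_zero by (simp add: field_simps del: of_nat_Suc)
    qed
    finally show ?thesis .
  qed
  have sm: "summable (f l1 l2)" if "l1 \<in> {0..p1}" for l1 l2
    unfolding f_def using assms that by (intro sumS0) auto
  have "T (- int p1) (- int p2) m 1 r = (\<Sum>n. \<Sum>l1=0..p1. \<Sum>l2=0..p2. c l1 l2 * f l1 l2 n)"
    unfolding T_def pt ..
  also have "\<dots> = (\<Sum>l1=0..p1. \<Sum>n. \<Sum>l2=0..p2. c l1 l2 * f l1 l2 n)"
    by (intro suminf_sum summable_sum summable_mult sm) auto
  also have "\<dots> = (\<Sum>l1=0..p1. \<Sum>l2=0..p2. \<Sum>n. c l1 l2 * f l1 l2 n)"
    by (intro sum.cong refl suminf_sum summable_mult sm) auto
  also have "\<dots> = (\<Sum>l1=0..p1. \<Sum>l2=0..p2. c l1 l2 * suminf (f l1 l2))"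
    using sm by (auto intro!: sum.cong suminf_mult)
  also have "\<dots> = (\<Sum>l1=0..p1. \<Sum>l2=0..p2. c l1 l2 * S 0 (m - p1 - p2 - 1 + l1 + l2) 1 r)"
    unfolding f_def S_def ..
  finally show ?thesis unfolding c_def by (simp add: sum_distrib_left mult_ac)
qed



lemma gen_dist: fixes a b c d :: real shows "c * (d * (a - b)) = d * (c * a - c * b)"
  by (simp add: algebra_simps)

lemma gen_num: fixes x y u v A :: real
  shows "((x + u) * (y + v) - x * y) / A = (x + u) * v / A + (y + v) * u / A - u * v / A"
proof -
  have "(x + u) * (y + v) - x * y = (x + u) * v + (y + v) * u - u * v" by (simp add: algebra_simps)
  then show ?thesis by (simp add: add_divide_distrib diff_divide_distrib)
qed

lemma gen_sign: fixes r R Q s :: real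
  assumes "r > 0" shows "s / R * (1 / Q) = - ((- s) / (r * R) * (r / Q))"
  using assms by (cases "R = 0"; cases "Q = 0") (simp_all add: field_simps)

lemma pf:
  fixes x r :: real
  assumes "x > 0" "r > 0" "m \<ge> 1"
  shows "1 / (x ^ m * (x + r)) = (\<Sum>i=2..m. (-1) ^ (m - i) / r ^ (m - i + 1) * (1 / x ^ i))
           + (-1) ^ (m - 1) / r ^ m * (1 / x - 1 / (x + r))"
  using assms(3)
proof (induction m rule: nat_induct_at_least)
  case base
  then show ?case using assms by (simp add: field_simps)
next
  case (Suc m)
  have "1 / (x ^ Suc m * (x + r)) = (1 / x) * (1 / (x ^ m * (x + r)))" by simp
  also have "\<dots> = (\<Sum>i=2..m. (-1) ^ (m - i) / r ^ (m - i + 1) * (1 / x ^ Suc i))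
           + (-1) ^ (m - 1) / r ^ m * (1 / x ^ 2) - (-1) ^ (m - 1) / r ^ m * (1 / (x * (x + r)))"
  proof -
    have x0: "x \<noteq> 0" "x + r \<noteq> 0" using assms by auto
    have A: "(1/x) * (\<Sum>i=2..m. (-1) ^ (m - i) / r ^ (m - i + 1) * (1/x^i)) = (\<Sum>i=2..m. (-1) ^ (m - i) / r ^ (m - i + 1) * (1 / x ^ Suc i))"
      by (simp add: sum_distrib_left mult_ac)
    have B: "(1/x) * ((-1) ^ (m - 1) / r ^ m * (1 / x - 1 / (x + r))) = (-1) ^ (m - 1) / r ^ m * (1 / x ^ 2) - (-1) ^ (m - 1) / r ^ m * (1 / (x * (x + r)))"
    proof -
      have "(1/x) * ((-1) ^ (m - 1) / r ^ m * (1 / x - 1 / (x + r))) = (-1) ^ (m - 1) / r ^ m * ((1/x) * (1/x) - (1/x) * (1 / (x + r)))"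
        by (rule gen_dist)
      also have "(1/x) * (1/x) = 1 / x^2" by (simp add: power2_eq_square)
      also have "(1/x) * (1 / (x + r)) = 1 / (x * (x + r))" by simp
      finally show ?thesis by (simp add: algebra_simps)
    qed
    have "(1/x) * (1/(x^m*(x+r))) = (1/x) * (\<Sum>i=2..m. (-1) ^ (m - i) / r ^ (m - i + 1) * (1/x^i)) + (1/x) * ((-1) ^ (m - 1) / r ^ m * (1 / x - 1 / (x + r)))"
      by (subst Suc.IH) (rule distrib_left)
    then show ?thesis using A B by linarith
  qed
  also have "(-1) ^ (m - 1) / r ^ m * (1 / (x * (x + r))) = - ((-1) ^ (Suc m - 1) / r ^ Suc m * (1 / x - 1 / (x + r)))"
  proof -
    have e1: "1/x - 1/(x+r) = r/(x*(x+r))" using assms by (simp add: field_simps)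
    have e2: "(-1::real) ^ (Suc m - 1) = - ((-1) ^ (m - 1))" using Suc.hyps by (cases m) auto
    have e3: "r ^ Suc m = r * r ^ m" by simp
    show ?thesis unfolding e1 e2 e3 using assms(2) by (rule gen_sign)
  qed
  also have "(\<Sum>i=2..m. (-1) ^ (m - i) / r ^ (m - i + 1) * (1 / x ^ Suc i))
       = (\<Sum>i=3..Suc m. (-1) ^ (Suc m - i) / r ^ (Suc m - i + 1) * (1 / x ^ i))"
  proof -
    have "(\<Sum>i=3..Suc m. (-1) ^ (Suc m - i) / r ^ (Suc m - i + 1) * (1 / x ^ i))
        = (\<Sum>i=2..m. (-1) ^ (Suc m - Suc i) / r ^ (Suc m - Suc i + 1) * (1 / x ^ Suc i))"
      by (subst sum.shift_bounds_cl_Suc_ivl[symmetric]) simp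
    then show ?thesis by simp
  qed
  also have "(\<Sum>i=2..Suc m. (-1) ^ (Suc m - i) / r ^ (Suc m - i + 1) * (1 / x ^ i))
      = (-1) ^ (m - 1) / r ^ m * (1 / x ^ 2) + (\<Sum>i=3..Suc m. (-1) ^ (Suc m - i) / r ^ (Suc m - i + 1) * (1 / x ^ i))"
  proof -
    have "{2..Suc m} = insert 2 {3..Suc m}" using Suc.hyps by auto
    moreover have "(-1::real) ^ (Suc m - 2) / r ^ (Suc m - 2 + 1) = (-1) ^ (m - 1) / r ^ m"
      using Suc.hyps by (simp add: numeral_2_eq_2 Suc_diff_le)
    ultimately show ?thesis by simp
  qed
  ultimately show ?case by simp
qed

lemma abel_k:
  fixes p1 p2 k :: nat
  assumes p: "p1 \<ge> 1" "p2 \<ge> 1"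
  shows "(\<Sum>n. harm (int p1) (Suc n) * harm (int p2) (Suc n) / (real (Suc n + k) * real (Suc n + k + 1)))
       = S (int p1) p2 1 k + S (int p2) p1 1 k - S 0 (p1 + p2 + 1) 1 k"
proof -
  define a where "a n = harm (int p1) n * harm (int p2) n" for n
  define g where "g n = a (Suc n) / (real (Suc n + k) * real (Suc n + k + 1))" for n
  define h where "h n = a n / real (n + k + 1)" for n
  define D where "D n = (a (Suc n) - a n) / real (Suc n + k)" for n
  define f1 where "f1 n = harm (int p1) (Suc n) / (real (Suc n) ^ p2 * real (Suc n + k) ^ 1)" for n
  define f2 where "f2 n = harm (int p2) (Suc n) / (real (Suc n) ^ p1 * real (Suc n + k) ^ 1)" for n
  define f3 where "f3 n = harm 0 (Suc n) / (real (Suc n) ^ (p1 + p2 + 1) * real (Suc n + k) ^ 1)" for n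
  have gs: "summable g" unfolding g_def a_def using sumTk[OF p] .
  have s1: "summable f1" unfolding f1_def using p by (intro sumS1) auto
  have s2: "summable f2" unfolding f2_def using p by (intro sumS1) auto
  have s3: "summable f3" unfolding f3_def using p by (intro sumS0) auto
  have Dg: "D n = g n + (h (Suc n) - h n)" for n
  proof -
    define A where "A = real (Suc n + k)"
    have A0: "A > 0" unfolding A_def by simp
    have e1: "real (n + k + 1) = A" "real (Suc n + k + 1) = A + 1" "real (Suc (Suc n) + k) = A + 1"
      "real (Suc n + k + 1) = A + 1" unfolding A_def by simp_all
    have gen: "y / (A * (A + 1)) + (y / (A + 1) - z / A) = (y - z) / A" for y z
    proof -
      have "A + 1 > 0" using A0 by simp
      then show ?thesis using A0 by (simp add: divide_simps) (simp add: algebra_simps)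
    qed
    show ?thesis unfolding D_def g_def h_def e1 A_def[symmetric] using gen by simp
  qed
  have ha0: "a 0 = 0" unfolding a_def harm_def by simp
  have hlim: "h \<longlonglongrightarrow> 0"
  proof -
    have "(\<lambda>n. h (Suc n)) \<longlonglongrightarrow> 0"
    proof (rule tendsto_sandwich[OF _ _ tendsto_const L_lim])
      show "\<forall>\<^sub>F n in sequentially. 0 \<le> h (Suc n)"
        unfolding h_def a_def by (intro always_eventually allI divide_nonneg_nonneg mult_nonneg_nonneg harm_nonneg) auto
      show "\<forall>\<^sub>F n in sequentially. h (Suc n) \<le> (1 + ln (real (Suc n)))^2 / real (Suc n)"
      proof (intro always_eventually allI)
        fix n
        have "h (Suc n) \<le> (1 + ln (real (Suc n)))^2 / real (Suc n + k + 1)"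
          unfolding h_def a_def using p by (intro divide_right_mono harm2_le_L2) auto
        also have "\<dots> \<le> (1 + ln (real (Suc n)))^2 / real (Suc n)"
          by (intro divide_left_mono) auto
        finally show "h (Suc n) \<le> (1 + ln (real (Suc n)))^2 / real (Suc n)" .
      qed
    qed
    then show ?thesis by (rule LIMSEQ_imp_Suc)
  qed
  have "(\<lambda>n. h (Suc n) - h n) sums (0 - h 0)" by (rule telescope_sums[OF hlim])
  then have tel: "(\<lambda>n. h (Suc n) - h n) sums 0" by (simp add: h_def ha0)
  have "D sums (suminf g + 0)"
    unfolding Dg[abs_def] by (intro sums_add summable_sums gs tel)
  then have Dg2: "suminf D = suminf g" by (simp add: sums_iff)
  have "D n = f1 n + f2 n - f3 n" for n
  proof -
    define x where "x = harm (int p1) n"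
    define y where "y = harm (int p2) n"
    define u where "u = 1 / real (Suc n) ^ p1"
    define v where "v = 1 / real (Suc n) ^ p2"
    have H1: "harm (int p1) (Suc n) = x + u" unfolding x_def u_def by (simp add: harm_Suc)
    have H2: "harm (int p2) (Suc n) = y + v" unfolding y_def v_def by (simp add: harm_Suc)
    have f3e: "f3 n = u * v / real (Suc n + k)"
      unfolding f3_def u_def v_def harm_zero by (simp add: power_add field_simps del: of_nat_Suc)
    have "D n = ((x + u) * (y + v) - x * y) / real (Suc n + k)"
      unfolding D_def a_def H1 H2 x_def y_def by simp
    also have "\<dots> = (x + u) * v / real (Suc n + k) + (y + v) * u / real (Suc n + k) - u * v / real (Suc n + k)"
      by (rule gen_num)
    also have "\<dots> = f1 n + f2 n - f3 n"
      unfolding f1_def f2_def f3e H1 H2 u_def v_def by simp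
    finally show ?thesis .
  qed
  then have Dext: "D = (\<lambda>n. f1 n + f2 n - f3 n)" by (rule ext)
  have fs: "(\<lambda>n. f1 n + f2 n - f3 n) sums (suminf f1 + suminf f2 - suminf f3)"
    by (intro sums_diff sums_add summable_sums s1 s2 s3)
  have "suminf D = suminf f1 + suminf f2 - suminf f3"
    unfolding Dext using fs by (simp add: sums_iff)
  then show ?thesis using Dg2
    unfolding g_def a_def S_def f1_def f2_def f3_def by simp
qed

lemma tele_r:
  fixes x :: real assumes "x > 0"
  shows "(\<Sum>k<r. 1 / ((x + real k) * (x + real k + 1))) = 1 / x - 1 / (x + real r)"
proof (induction r)
  case 0 then show ?case by simp
next
  case (Suc r)
  have "1 / ((x + real r) * (x + real r + 1)) = 1 / (x + real r) - 1 / (x + real r + 1)"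
    using assms by (simp add: field_simps)
  then show ?case using Suc by (simp add: algebra_simps)
qed

lemma part1:
  fixes p1 p2 m r :: nat
  assumes p: "p1 \<ge> 1" "p2 \<ge> 1" and m: "m \<ge> 1" and r: "r \<ge> 1"
  shows "T (int p1) (int p2) m 1 r =
        (\<Sum>i=2..m. (-1) ^ (m - i) / real r ^ (m - i + 1) * Sppp p1 p2 i)
      + (-1) ^ (m - 1) / real r ^ m * (Spp p1 (p2 + 1) + Spp p2 (p1 + 1))
      - (-1) ^ (m - 1) / real r ^ m * zeta_nat (p1 + p2 + 1)
      + (-1) ^ (m - 1) / real r ^ m * (\<Sum>b=1..r-1. S (int p1) p2 1 b)
      + (-1) ^ (m - 1) / real r ^ m *
          ((\<Sum>b=1..r-1. S (int p2) p1 1 b) - (\<Sum>b=1..r-1. S 0 (p1 + p2 + 1) 1 b))"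
proof -
  define a where "a n = harm (int p1) (Suc n) * harm (int p2) (Suc n)" for n
  define c where "c i = (-1) ^ (m - i) / real r ^ (m - i + 1)" for i
  define d where "d = (-1::real) ^ (m - 1) / real r ^ m"
  define fi where "fi i n = a n / real (Suc n) ^ i" for i n
  define g where "g k n = a n / (real (Suc n + k) * real (Suc n + k + 1))" for k n
  define F where "F k = S (int p1) p2 1 k + S (int p2) p1 1 k - S 0 (p1 + p2 + 1) 1 k" for k
  have pt: "a n / (real (Suc n) ^ m * real (Suc n + r) ^ 1) = (\<Sum>i=2..m. c i * fi i n) + d * (\<Sum>k<r. g k n)" for n
  proof -
    have x: "real (Suc n) > 0" by simp
    have rr: "real r > 0" using r by simp
    have "a n / (real (Suc n) ^ m * real (Suc n + r) ^ 1) = a n * (1 / (real (Suc n) ^ m * (real (Suc n) + real r)))"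
      by simp
    also have "\<dots> = a n * ((\<Sum>i=2..m. c i * (1 / real (Suc n) ^ i)) + d * (\<Sum>k<r. 1 / ((real (Suc n) + real k) * (real (Suc n) + real k + 1))))"
      unfolding pf[OF x rr m] tele_r[OF x] c_def d_def ..
    also have "\<dots> = (\<Sum>i=2..m. c i * fi i n) + d * (\<Sum>k<r. g k n)"
      unfolding fi_def g_def by (simp add: sum_distrib_left sum_distrib_right algebra_simps)
    finally show ?thesis .
  qed
  have sfi: "summable (fi i)" if "i \<in> {2..m}" for i
    unfolding fi_def a_def using p that by (intro sumSppp) auto
  have sg: "summable (g k)" for k
    unfolding g_def a_def using sumTk[OF p] .
  have "T (int p1) (int p2) m 1 r = (\<Sum>n. (\<Sum>i=2..m. c i * fi i n) + d * (\<Sum>k<r. g k n))"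
    unfolding T_def a_def[symmetric] pt ..
  also have "\<dots> = (\<Sum>n. \<Sum>i=2..m. c i * fi i n) + (\<Sum>n. d * (\<Sum>k<r. g k n))"
    by (intro suminf_add[symmetric] summable_sum summable_mult sfi sg) auto
  also have "(\<Sum>n. \<Sum>i=2..m. c i * fi i n) = (\<Sum>i=2..m. \<Sum>n. c i * fi i n)"
    by (intro suminf_sum summable_mult sfi) auto
  also have "\<dots> = (\<Sum>i=2..m. c i * suminf (fi i))"
    using sfi by (auto intro!: sum.cong suminf_mult)
  also have "\<dots> = (\<Sum>i=2..m. c i * Sppp p1 p2 i)"
    unfolding fi_def a_def Sppp_def ..
  also have "(\<Sum>n. d * (\<Sum>k<r. g k n)) = d * (\<Sum>n. \<Sum>k<r. g k n)"
    by (intro suminf_mult summable_sum sg)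
  also have "(\<Sum>n. \<Sum>k<r. g k n) = (\<Sum>k<r. \<Sum>n. g k n)"
    by (intro suminf_sum sg)
  also have "\<dots> = (\<Sum>k<r. F k)"
    unfolding g_def a_def F_def using abel_k[OF p] by simp
  also have "\<dots> = F 0 + (\<Sum>b=1..r-1. F b)"
  proof -
    have "{..<r} = insert 0 {1..r-1}" using r by auto
    then show ?thesis by simp
  qed
  also have "F 0 = Spp p1 (p2 + 1) + Spp p2 (p1 + 1) - zeta_nat (p1 + p2 + 1)"
    unfolding F_def S_def Spp_def zeta_nat_def harm_zero
    by (simp add: field_simps del: of_nat_Suc)
  finally have Teq: "T (int p1) (int p2) m 1 r = (\<Sum>i=2..m. c i * Sppp p1 p2 i) + d * (Spp p1 (p2 + 1) + Spp p2 (p1 + 1) - zeta_nat (p1 + p2 + 1) + (\<Sum>b=1..r-1. F b))" .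
  have sF: "(\<Sum>b=1..r-1. F b) = (\<Sum>b=1..r-1. S (int p1) p2 1 b) + (\<Sum>b=1..r-1. S (int p2) p1 1 b) - (\<Sum>b=1..r-1. S 0 (p1 + p2 + 1) 1 b)"
    unfolding F_def by (simp add: sum.distrib sum_subtractf)
  show ?thesis unfolding Teq sF unfolding c_def d_def
    by (simp only: distrib_left right_diff_distrib)
qed


theorem lemma8:
  shows
  "(\<forall>p1 p2 m r :: nat. p1 \<ge> 1 \<longrightarrow> p2 \<ge> 1 \<longrightarrow> m \<ge> 1 \<longrightarrow> r \<ge> 1 \<longrightarrow>
      T (int p1) (int p2) m 1 r =
        (\<Sum>i=2..m. (-1) ^ (m - i) / real r ^ (m - i + 1) * Sppp p1 p2 i)
      + (-1) ^ (m - 1) / real r ^ m * (Spp p1 (p2 + 1) + Spp p2 (p1 + 1))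
      - (-1) ^ (m - 1) / real r ^ m * zeta_nat (p1 + p2 + 1)
      + (-1) ^ (m - 1) / real r ^ m * (\<Sum>b=1..r-1. S (int p1) p2 1 b)
      + (-1) ^ (m - 1) / real r ^ m *
          ((\<Sum>b=1..r-1. S (int p2) p1 1 b) - (\<Sum>b=1..r-1. S 0 (p1 + p2 + 1) 1 b)))
 \<and> (\<forall>p1 p2 m r :: nat. p1 \<ge> 1 \<longrightarrow> m \<ge> 1 \<longrightarrow> r \<ge> 1 \<longrightarrow> m \<ge> p2 + 2 \<longrightarrow>
      T (int p1) (- int p2) m 1 r =
        1 / real (p2 + 1) * (\<Sum>l=0..p2. real ((p2 + 1) choose l) * bernoulli_plus l *
                                          S (int p1) (m - p2 - 1 + l) 1 r))
 \<and> (\<forall>p1 p2 m r :: nat. m \<ge> 1 \<longrightarrow> r \<ge> 1 \<longrightarrow> m \<ge> p1 + p2 + 3 \<longrightarrow>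
      T (- int p1) (- int p2) m 1 r =
        1 / (real (p1 + 1) * real (p2 + 1)) *
          (\<Sum>l1=0..p1. \<Sum>l2=0..p2. real ((p1 + 1) choose l1) * real ((p2 + 1) choose l2) *
               bernoulli_plus l1 * bernoulli_plus l2 *
               S 0 (m - p1 - p2 - 1 + l1 + l2) 1 r))"
  using part1 part2 part3 by blast

end
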